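(* Fix $n\ge1$ and a polynomial $h(x)=h_0+h_1x+\dots+h_{n+1}x^{n+1}$ with $h(1)\ne0$. Define $(a_k)_{k\ge0}$ by $\sum_{k\ge0}a_kx^k=h(x)/(1-x)^{n+1}$, and for each integer $b\ge1$ let $h^{\langle b\rangle}(x)$ be the polynomial of degree at most $n+1$ such that $\sum_{k\ge0}a_{bk}x^k=h^{\langle b\rangle}(x)/(1-x)^{n+1}$. Then, coefficientwise as $b\to\infty$, $$\frac{h^{\langle b\rangle}(x)}{b^n\,h(1)}\longrightarrow\frac{p_n(x)}{n!},$$ where $p_n(x)=\sum_{j\ge0}A(n,j)x^{j+1}$ is the $n$th Eulerian polynomial.
   Context: $A(n,j)$ is the number of permutations $\sigma\in S_n$ with exactly $j$ descents (a descent at $i$, $1\le i\le n-1$, means $\sigma(i+1)<\sigma(i)$). *)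

theory Defs
  imports Complex_Main "HOL-Computational_Algebra.Computational_Algebra"
    "HOL-Combinatorics.Permutations"
begin

definition eulerian_num :: "nat \<Rightarrow> nat \<Rightarrow> nat" where
  "eulerian_num n j = card {\<sigma>. \<sigma> permutes {1..n} \<and>
      card {i \<in> {1..<n}. \<sigma> (Suc i) < \<sigma> i} = j}"

definition eulerian_poly :: "nat \<Rightarrow> real poly" where
  "eulerian_poly n = (\<Sum>j\<le>n. monom (real (eulerian_num n j)) (Suc j))"

definition hilb_series :: "nat \<Rightarrow> real poly \<Rightarrow> real fps" where
  "hilb_series n h = fps_of_poly h / (1 - fps_X) ^ (Suc n)"

text \<open>h^<b>: the numerator with sum_k a_(bk) x^k = h^<b>(x)/(1-x)^(n+1),
  given as the (formal) series (sum_k a_(bk) x^k) * (1-x)^(n+1).\<close>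
definition veronese_num :: "nat \<Rightarrow> real poly \<Rightarrow> nat \<Rightarrow> real fps" where
  "veronese_num n h b =
     Abs_fps (\<lambda>k. fps_nth (hilb_series n h) (b * k)) * (1 - fps_X) ^ (Suc n)"

end

theory Submission
  imports Defs
begin


fun des :: "nat list \<Rightarrow> nat" where
  "des [] = 0"
| "des (x # xs) = (case xs of [] \<Rightarrow> 0 | y # _ \<Rightarrow> (if y < x then 1 else 0)) + des xs"

fun ins :: "nat \<Rightarrow> nat \<Rightarrow> nat list \<Rightarrow> nat list" where
  "ins 0 m ys = m # ys"
| "ins (Suc p) m [] = [m]"
| "ins (Suc p) m (y # ys) = y # ins p m ys"

lemma ins_take_drop: "p \<le> length ys \<Longrightarrow> ins p m ys = take p ys @ m # drop p ys"
  by (induction p m ys rule: ins.induct) auto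

lemma des_ins:
  assumes "\<forall>y\<in>set ys. y < m" "ys \<noteq> []"
  shows "des (ins p m ys) = des ys + (if p < length ys \<and> (p = 0 \<or> \<not> ys!p < ys!(p-1)) then 1 else 0)"
  using assms
proof (induction ys arbitrary: p)
  case Nil then show ?case by simp
next
  case (Cons y ys)
  show ?case
  proof (cases p)
    case 0 then show ?thesis using Cons.prems by (cases ys) auto
  next
    case (Suc q)
    show ?thesis
    proof (cases ys)
      case Nil then show ?thesis using Suc Cons.prems by (cases q) auto
    next
      case (Cons y' zs)
      show ?thesis
      proof (cases q)
        case 0 then show ?thesis using Suc Cons \<open>\<forall>y\<in>set (y # ys). y < m\<close> by simp
      next
        case (Suc r)
        have IH: "des (ins q m ys) = des ys + (if q < length ys \<and> (q = 0 \<or> \<not> ys!q < ys!(q-1)) then 1 else 0)"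
          using Cons.IH Cons.prems \<open>ys = y' # zs\<close> by simp
        have "ins q m ys = y' # ins r m zs" using Suc \<open>ys = y' # zs\<close> by simp
        then show ?thesis using IH \<open>p = Suc q\<close> Suc \<open>ys = y' # zs\<close> by simp
      qed
    qed
  qed
qed

definition dset :: "nat list \<Rightarrow> nat set" where
  "dset xs = {i. Suc i < length xs \<and> xs!Suc i < xs!i}"

lemma des_card: "des xs = card (dset xs)"
proof (induction xs)
  case Nil then show ?case by (simp add: dset_def)
next
  case (Cons x xs)
  have eq: "dset (x # xs) = (if xs \<noteq> [] \<and> hd xs < x then {0} else {}) \<union> Suc ` dset xs"
  proof (intro set_eqI iffI)
    fix i assume "i \<in> dset (x # xs)"
    then show "i \<in> (if xs \<noteq> [] \<and> hd xs < x then {0} else {}) \<union> Suc ` dset xs"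
      by (cases i) (auto simp: dset_def hd_conv_nth)
  next
    fix i assume "i \<in> (if xs \<noteq> [] \<and> hd xs < x then {0} else {}) \<union> Suc ` dset xs"
    then show "i \<in> dset (x # xs)"
      by (cases "xs \<noteq> [] \<and> hd xs < x") (auto simp: dset_def hd_conv_nth)
  qed
  have fin: "finite (dset xs)" unfolding dset_def by (rule finite_subset[of _ "{..<length xs}"]) auto
  have "card (dset (x # xs)) = (if xs \<noteq> [] \<and> hd xs < x then 1 else 0) + card (dset xs)"
    unfolding eq using fin by (auto simp: card_image)
  then show ?case using Cons by (cases xs) auto
qed

lemma dset_sub: "dset ys \<subseteq> {..<length ys - 1}"
  by (auto simp: dset_def)

lemma fin_dset: "finite (dset ys)"
  by (rule finite_subset[OF dset_sub]) auto

lemma des_le: "des ys \<le> length ys - 1"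
  using card_mono[OF _ dset_sub] by (simp add: des_card)

lemma count_pos:
  assumes "\<forall>y\<in>set ys. y < m" "ys \<noteq> []"
  shows "card {p \<in> {..length ys}. des (ins p m ys) = J} =
     (if des ys = J then J + 1 else 0) + (if Suc (des ys) = J then length ys - des ys else 0)"
proof -
  define L where "L = length ys"
  define c where "c p = (p < length ys \<and> (p = 0 \<or> \<not> ys!p < ys!(p-1)))" for p
  have dI: "des (ins p m ys) = des ys + (if c p then 1 else 0)" for p
    using des_ins[OF assms] c_def by simp
  define Z where "Z = {p \<in> {..L}. \<not> c p}"
  define Ov where "Ov = {p \<in> {..L}. c p}"
  have Zeq: "Z = insert L (Suc ` dset ys)"
  proof (intro set_eqI iffI)
    fix p assume "p \<in> Z"
    then show "p \<in> insert L (Suc ` dset ys)"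
      by (cases p) (auto simp: Z_def c_def L_def dset_def image_iff)
  next
    fix p assume "p \<in> insert L (Suc ` dset ys)"
    then show "p \<in> Z"
      by (auto simp: Z_def c_def L_def dset_def)
  qed
  have "L \<notin> Suc ` dset ys" by (auto simp: L_def dset_def)
  then have cZ: "card Z = Suc (des ys)"
    unfolding Zeq using fin_dset by (simp add: card_image des_card)
  have ZO: "Z \<union> Ov = {..L}" "Z \<inter> Ov = {}" by (auto simp: Z_def Ov_def)
  have "card Z + card Ov = Suc L"
    using card_Un_disjoint[of Z Ov] ZO by (simp add: Z_def Ov_def)
  then have cO: "card Ov = L - des ys" using cZ by simp
  have "{p \<in> {..length ys}. des (ins p m ys) = J} =
     (if des ys = J then Z else if Suc (des ys) = J then Ov else {})"
    by (auto simp: dI Z_def Ov_def L_def)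
  then show ?thesis using cZ cO L_def by auto
qed

definition S :: "nat \<Rightarrow> nat list set" where
  "S n = {xs. distinct xs \<and> set xs = {1..n}}"

lemma S_length: "xs \<in> S n \<Longrightarrow> length xs = n"
  using distinct_card[of xs] by (auto simp: S_def)

lemma finite_S: "finite (S n)"
proof -
  have "S n \<subseteq> {xs. set xs \<subseteq> {1..n} \<and> length xs = n}"
    using S_length by (auto simp: S_def)
  then show ?thesis using finite_lists_length_eq[of "{1..n}" n] finite_subset by auto
qed

lemma S_Suc_image:
  "S (Suc n) = (\<lambda>(ys, p). ins p (Suc n) ys) ` (S n \<times> {..n})"
proof (intro set_eqI iffI)
  fix xs assume xs: "xs \<in> S (Suc n)"
  then have "Suc n \<in> set xs" by (auto simp: S_def)
  then obtain as bs where xsd: "xs = as @ Suc n # bs" using split_list by metis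
  have "length xs = Suc n" using S_length xs by blast
  then have lp: "length as \<le> n" using xsd by simp
  have "as @ bs \<in> S n"
  proof -
    have d: "distinct (as @ Suc n # bs)" using xs xsd by (simp add: S_def)
    have st: "set (as @ Suc n # bs) = {1..Suc n}" using xs xsd by (simp add: S_def)
    have "set (as @ bs) = {1..Suc n} - {Suc n}" using d st by auto
    also have "\<dots> = {1..n}" by auto
    finally show ?thesis using d by (simp add: S_def)
  qed
  moreover have "ins (length as) (Suc n) (as @ bs) = xs"
    using xsd by (simp add: ins_take_drop)
  ultimately show "xs \<in> (\<lambda>(ys, p). ins p (Suc n) ys) ` (S n \<times> {..n})"
    using lp by (auto intro!: image_eqI[where x="(as @ bs, length as)"])
next
  fix xs assume "xs \<in> (\<lambda>(ys, p). ins p (Suc n) ys) ` (S n \<times> {..n})"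
  then obtain ys p where ys: "ys \<in> S n" "p \<le> n" and xs: "xs = ins p (Suc n) ys" by auto
  have l: "length ys = n" using S_length ys by blast
  then have xs': "xs = take p ys @ Suc n # drop p ys" using xs ys ins_take_drop by simp
  have "Suc n \<notin> set ys" using ys by (auto simp: S_def)
  then have "Suc n \<notin> set (take p ys)" "Suc n \<notin> set (drop p ys)"
    using in_set_takeD in_set_dropD by fastforce+
  moreover have "distinct (take p ys @ drop p ys)" using ys by (simp add: S_def)
  moreover have "set (take p ys @ drop p ys) = {1..n}" using ys by (simp add: S_def)
  ultimately show "xs \<in> S (Suc n)" unfolding xs' S_def
    by (auto simp del: append_take_drop_id)
qed

lemma ins_inj:
  "inj_on (\<lambda>(ys, p). ins p (Suc n) ys) (S n \<times> {..n})"
proof (rule inj_onI, clarsimp)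
  fix ys p zs q assume a: "ys \<in> S n" "p \<le> n" "zs \<in> S n" "q \<le> n"
    and e: "ins p (Suc n) ys = ins q (Suc n) zs"
  have l: "length ys = n" "length zs = n" using S_length a by blast+
  have "Suc n \<notin> set ys" using a by (auto simp: S_def)
  then have nin: "Suc n \<notin> set (take p ys)" "Suc n \<notin> set (drop p ys)"
    using in_set_takeD in_set_dropD by fastforce+
  have "take p ys @ Suc n # drop p ys = take q zs @ Suc n # drop q zs"
    using e a l by (simp add: ins_take_drop)
  then have "take p ys = take q zs" "drop p ys = drop q zs"
    using append_Cons_eq_iff[OF nin] by auto
  then show "ys = zs \<and> p = q"
    by (metis a(2) a(4) append_take_drop_id l length_take min.absorb2)
qed

definition Lc :: "nat \<Rightarrow> nat \<Rightarrow> nat" where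
  "Lc n J = card {xs \<in> S n. des xs = J}"

lemma Lc_rec:
  assumes "n \<ge> 1"
  shows "Lc (Suc n) J = (J + 1) * Lc n J + (if J \<ge> 1 then (n - (J - 1)) * Lc n (J - 1) else 0)"
proof -
  let ?g = "\<lambda>(ys, p). ins p (Suc n) ys"
  let ?A = "SIGMA ys:S n. {p \<in> {..n}. des (ins p (Suc n) ys) = J}"
  have "{xs \<in> S (Suc n). des xs = J} = ?g ` ?A"
    unfolding S_Suc_image by auto
  moreover have "inj_on ?g ?A"
    by (rule inj_on_subset[OF ins_inj]) auto
  ultimately have "Lc (Suc n) J = card ?A"
    unfolding Lc_def by (simp add: card_image)
  also have "\<dots> = (\<Sum>ys\<in>S n. card {p \<in> {..n}. des (ins p (Suc n) ys) = J})"
    using finite_S by simp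
  also have "\<dots> = (\<Sum>ys\<in>S n. (if des ys = J then J + 1 else 0) +
        (if Suc (des ys) = J then n - des ys else 0))"
  proof (rule sum.cong[OF refl])
    fix ys assume ys: "ys \<in> S n"
    have l: "length ys = n" using S_length ys by blast
    have "\<forall>y\<in>set ys. y < Suc n" "ys \<noteq> []" using ys assms l by (auto simp: S_def)
    from count_pos[OF this, of J] show "card {p \<in> {..n}. des (ins p (Suc n) ys) = J} =
        (if des ys = J then J + 1 else 0) + (if Suc (des ys) = J then n - des ys else 0)"
      using l by simp
  qed
  also have "\<dots> = (\<Sum>ys\<in>S n. if des ys = J then J + 1 else 0) +
        (\<Sum>ys\<in>S n. if Suc (des ys) = J then n - des ys else 0)"
    by (rule sum.distrib)
  also have "(\<Sum>ys\<in>S n. if des ys = J then J + 1 else 0) = (J + 1) * Lc n J"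
    using finite_S by (simp add: sum.If_cases Lc_def Int_def algebra_simps)
  also have "(\<Sum>ys\<in>S n. if Suc (des ys) = J then n - des ys else 0) =
       (if J \<ge> 1 then (n - (J - 1)) * Lc n (J - 1) else 0)"
  proof (cases "J \<ge> 1")
    case True
    have "(\<Sum>ys\<in>S n. if Suc (des ys) = J then n - des ys else 0) =
        (\<Sum>ys\<in>{ys \<in> S n. des ys = J - 1}. n - (J - 1))"
    proof -
      have e: "{x \<in> S n. Suc (des x) = J} = {ys \<in> S n. des ys = J - 1}" using True by auto
      show ?thesis using finite_S
        by (simp only: sum.If_cases Int_def[symmetric] sum.neutral_const add_0_right)
           (simp add: e Int_def)
    qed
    then show ?thesis using True by (simp add: Lc_def)
  qed simp
  finally show ?thesis .
qed

lemma desc_map: "card {i \<in> {1..<n}. \<sigma> (Suc i) < \<sigma> i} = des (map \<sigma> [1..<Suc n])"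
proof -
  have "dset (map \<sigma> [1..<Suc n]) = {i. Suc i < n \<and> \<sigma> (Suc (Suc i)) < \<sigma> (Suc i)}"
    by (auto simp del: upt_Suc simp: dset_def)
  moreover have "{i \<in> {1..<n}. \<sigma> (Suc i) < \<sigma> i} = Suc ` {i. Suc i < n \<and> \<sigma> (Suc (Suc i)) < \<sigma> (Suc i)}"
  proof (intro set_eqI iffI)
    fix i assume "i \<in> {i \<in> {1..<n}. \<sigma> (Suc i) < \<sigma> i}"
    then show "i \<in> Suc ` {i. Suc i < n \<and> \<sigma> (Suc (Suc i)) < \<sigma> (Suc i)}"
      by (cases i) auto
  qed auto
  ultimately show ?thesis by (simp add: des_card card_image)
qed

lemma eulerian_Lc: "eulerian_num n J = Lc n J"
proof -
  let ?f = "\<lambda>\<sigma>. map \<sigma> [1..<Suc n]"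
  let ?g = "\<lambda>xs i. if i \<in> {1..n} then xs ! (i - 1) else i"
  let ?A = "{\<sigma>. \<sigma> permutes {1..n} \<and> card {i \<in> {1..<n}. \<sigma> (Suc i) < \<sigma> i} = J}"
  let ?B = "{xs \<in> S n. des xs = J}"
  have "bij_betw ?f ?A ?B"
  proof (rule bij_betw_byWitness)
    show "\<forall>a\<in>?A. ?g (?f a) = a"
    proof
      fix \<sigma> assume "\<sigma> \<in> ?A"
      then have p: "\<sigma> permutes {1..n}" by simp
      show "?g (?f \<sigma>) = \<sigma>"
      proof
        fix i show "?g (?f \<sigma>) i = \<sigma> i"
          using permutes_not_in[OF p, of i] by (auto simp: nth_append simp del: upt_Suc)
      qed
    qed
    show "\<forall>a'\<in>?B. ?f (?g a') = a'"
    proof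
      fix xs assume "xs \<in> ?B"
      then have l: "length xs = n" using S_length by blast
      show "?f (?g xs) = xs"
        by (rule nth_equalityI) (auto simp: l nth_append simp del: upt_Suc)
    qed
    show "?f ` ?A \<subseteq> ?B"
    proof
      fix xs assume "xs \<in> ?f ` ?A"
      then obtain \<sigma> where p: "\<sigma> permutes {1..n}" and c: "card {i \<in> {1..<n}. \<sigma> (Suc i) < \<sigma> i} = J"
        and xs: "xs = ?f \<sigma>" by auto
      have "inj_on \<sigma> {1..<Suc n}" using permutes_inj_on[OF p] by (simp add: atLeastLessThanSuc_atLeastAtMost)
      then have "distinct xs" using xs by (simp add: distinct_map del: upt_Suc)
      moreover have "set xs = {1..n}" using xs permutes_image[OF p]
        by (simp add: atLeastLessThanSuc_atLeastAtMost del: upt_Suc)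
      ultimately show "xs \<in> ?B" using c desc_map xs by (simp add: S_def)
    qed
    show "?g ` ?B \<subseteq> ?A"
    proof
      fix \<tau> assume "\<tau> \<in> ?g ` ?B"
      then obtain xs where xs: "xs \<in> ?B" and t: "\<tau> = ?g xs" by blast
      have l: "length xs = n" using S_length xs by blast
      have d: "distinct xs" and st: "set xs = {1..n}" using xs by (auto simp: S_def)
      have inj: "inj_on \<tau> {1..n}"
      proof (rule inj_onI)
        fix a b assume ab: "a \<in> {1..n}" "b \<in> {1..n}" "\<tau> a = \<tau> b"
        then have "xs ! (a - 1) = xs ! (b - 1)" using t by simp
        then have "a - 1 = b - 1" using d l ab nth_eq_iff_index_eq[of xs "a - 1" "b - 1"] by auto
        then show "a = b" using ab by auto
      qed
      have img: "\<tau> ` {1..n} \<subseteq> {1..n}"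
      proof
        fix y assume "y \<in> \<tau> ` {1..n}"
        then obtain a where a: "a \<in> {1..n}" "y = xs ! (a - 1)" using t by auto
        then have "a - 1 < length xs" using l by auto
        then have "y \<in> set xs" using a by simp
        then show "y \<in> {1..n}" using st by simp
      qed
      have "\<tau> ` {1..n} = {1..n}" using endo_inj_surj[OF _ img inj] by simp
      then have "bij_betw \<tau> {1..n} {1..n}" using inj by (simp add: bij_betw_def)
      moreover have "\<tau> x = x" if "x \<notin> {1..n}" for x using that t by auto
      ultimately have p: "\<tau> permutes {1..n}" by (rule bij_imp_permutes)
      have "?f \<tau> = xs" by (rule nth_equalityI) (auto simp: l t simp del: upt_Suc)
      then show "\<tau> \<in> ?A" using p desc_map[of n \<tau>] xs by simp
    qed
  qed
  then show ?thesis unfolding eulerian_num_def Lc_def by (rule bij_betw_same_card)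
qed

lemma Lc_zero: "n \<ge> 1 \<Longrightarrow> J \<ge> n \<Longrightarrow> Lc n J = 0"
proof -
  assume a: "n \<ge> 1" "J \<ge> n"
  have "{xs \<in> S n. des xs = J} = {}"
  proof (rule ccontr)
    assume "{xs \<in> S n. des xs = J} \<noteq> {}"
    then obtain xs where "xs \<in> S n" "des xs = J" by auto
    then have "length xs = n" using S_length by blast
    then show False using des_le[of xs] a \<open>des xs = J\<close> by linarith
  qed
  then show ?thesis unfolding Lc_def by (metis card.empty)
qed

lemma Lc_one: "Lc 1 J = (if J = 0 then 1 else 0)"
proof -
  have "S 1 = {[1]}"
  proof (intro set_eqI iffI)
    fix xs assume "xs \<in> S 1"
    then have l: "length xs = 1" and st: "set xs = {1}" using S_length by (auto simp: S_def)
    from l obtain a where "xs = [a]" by (metis One_nat_def length_0_conv length_Suc_conv)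
    with st show "xs \<in> {[1]}" by simp
  next
    fix xs assume "xs \<in> {[1::nat]}"
    then show "xs \<in> S 1" by (simp add: S_def)
  qed
  then have "{xs \<in> S 1. des xs = J} = (if J = 0 then {[1]} else {})"
  proof -
    have d: "des [Suc 0] = 0" by simp
    show ?thesis unfolding \<open>S 1 = {[1]}\<close> using d by (cases "J = 0") (auto simp: set_eq_iff)
  qed
  then show ?thesis unfolding Lc_def by simp
qed



lemma one_minus_X_mult_nth:
  "((1 - fps_X) * (g :: real fps)) $ k = g $ k - (if k = 0 then 0 else g $ (k - 1))"
proof -
  have "(1 - fps_X) * g = g - fps_X * g" by (simp add: algebra_simps)
  then show ?thesis by simp
qed

definition F :: "nat \<Rightarrow> real fps" where "F n = Abs_fps (\<lambda>k. real k ^ n)"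
definition E :: "nat \<Rightarrow> real fps" where "E n = F n * (1 - fps_X) ^ Suc n"

lemma F_Suc: "F (Suc n) = fps_X * fps_deriv (F n)"
  by (rule fps_ext) (auto simp: F_def)

lemma ring_id:
  fixes x u d f :: "'a::comm_ring_1"
  shows "x * (u * (d * u ^ Suc n + f * (of_nat (Suc n) * (- 1) * u ^ n)) + of_nat (Suc n) * (f * u ^ Suc n))
       = x * d * u ^ Suc (Suc n)"
  by (simp add: algebra_simps)

lemma E_rec: "E (Suc n) = fps_X * ((1 - fps_X) * fps_deriv (E n) + of_nat (Suc n) * E n)"
proof -
  have d: "fps_deriv ((1 - fps_X :: real fps) ^ Suc n) = of_nat (Suc n) * (- 1) * (1 - fps_X) ^ n"
    unfolding fps_deriv_power' by simp
  show ?thesis unfolding E_def F_Suc fps_deriv_mult d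
    using ring_id[of fps_X "1 - fps_X" "fps_deriv (F n)" n "F n"] by (simp add: add.commute)
qed

lemma E_Suc_nth:
  "E (Suc n) $ j = (if j = 0 then 0 else real j * E n $ j + (real n + 2 - real j) * E n $ (j - 1))"
proof (cases j)
  case 0 then show ?thesis by (simp add: E_rec)
next
  case (Suc k)
  have "E (Suc n) $ j = ((1 - fps_X) * fps_deriv (E n) + of_nat (Suc n) * E n) $ k"
    using Suc by (simp add: E_rec)
  also have "\<dots> = real j * E n $ j - (if k = 0 then 0 else real k * E n $ k) + real (Suc n) * E n $ k"
    using Suc by (simp add: one_minus_X_mult_nth fps_of_nat[symmetric])
  finally show ?thesis using Suc by (cases k) (simp_all add: algebra_simps)
qed

lemma E0_nth: "E 0 $ j = (if j = 0 then 1 else 0)"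
proof -
  have "E 0 = (1 - fps_X) * F 0" by (simp add: E_def mult.commute)
  then show ?thesis by (simp add: one_minus_X_mult_nth F_def)
qed

lemma coeff_eul: "n \<ge> 1 \<Longrightarrow> coeff (eulerian_poly n) j = (if j = 0 then 0 else real (Lc n (j - 1)))"
proof -
  assume n: "n \<ge> 1"
  have "coeff (eulerian_poly n) j = (\<Sum>J\<le>n. if Suc J = j then real (eulerian_num n J) else 0)"
    by (simp add: eulerian_poly_def coeff_sum coeff_monom)
  also have "\<dots> = (if j = 0 then 0 else real (Lc n (j - 1)))"
  proof (cases j)
    case (Suc J)
    show ?thesis
    proof (cases "J \<le> n")
      case True
      then show ?thesis using Suc by (simp add: eulerian_Lc)
    next
      case False
      then show ?thesis using Suc Lc_zero[OF n, of J] by simp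
    qed
  qed simp
  finally show ?thesis .
qed

lemma E_eul: "n \<ge> 1 \<Longrightarrow> E n $ j = coeff (eulerian_poly n) j"
proof (induction n arbitrary: j rule: dec_induct)
  case base
  have l1: "Lc (Suc 0) J = (if J = 0 then 1 else 0)" for J using Lc_one by simp
  show ?case
  proof (cases "j \<le> 1")
    case True
    then show ?thesis by (cases j) (simp_all add: coeff_eul E_Suc_nth[of 0, simplified] E0_nth l1)
  next
    case False
    then show ?thesis by (simp add: coeff_eul E_Suc_nth[of 0, simplified] E0_nth l1)
  qed
next
  case (step n)
  have n: "n \<ge> 1" using step by simp
  show ?case
  proof (cases j)
    case 0 then show ?thesis by (simp add: E_Suc_nth coeff_eul)
  next
    case (Suc J)
    have r: "Lc (Suc n) J = (J + 1) * Lc n J + (if J \<ge> 1 then (n - (J - 1)) * Lc n (J - 1) else 0)"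
      by (rule Lc_rec[OF n])
    have "E (Suc n) $ j = real j * real (Lc n J) +
       (real n + 2 - real j) * (if J = 0 then 0 else real (Lc n (J - 1)))"
      using Suc step.IH coeff_eul[OF n] by (simp add: E_Suc_nth)
    also have "\<dots> = real (Lc (Suc n) J)"
    proof (cases "J \<ge> 1")
      case True
      show ?thesis
      proof (cases "J - 1 < n")
        case True
        then have "real (n - (J - 1)) = real n + 2 - real j" using Suc \<open>J \<ge> 1\<close> by simp
        moreover have "real (Lc (Suc n) J) = real (J + 1) * real (Lc n J) + real (n - (J - 1)) * real (Lc n (J - 1))"
          using r \<open>J \<ge> 1\<close> by (simp only: if_True of_nat_add of_nat_mult)
        ultimately show ?thesis using Suc \<open>J \<ge> 1\<close> by (simp add: algebra_simps)
      next
        case False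
        then show ?thesis using r Suc \<open>J \<ge> 1\<close> Lc_zero[OF n, of "J - 1"] by (simp add: algebra_simps)
      qed
    next
      case False
      then show ?thesis using r Suc by (simp add: algebra_simps)
    qed
    finally show ?thesis using Suc coeff_eul[of "Suc n"] by simp
  qed
qed



definition G :: "nat \<Rightarrow> real fps" where "G n = Abs_fps (\<lambda>k. real ((k + n) choose n))"

lemma G_step: "(1 - fps_X) * G (Suc n) = G n"
proof (rule fps_ext)
  fix k
  show "((1 - fps_X) * G (Suc n)) $ k = G n $ k"
  proof (cases k)
    case 0 then show ?thesis by (simp add: one_minus_X_mult_nth G_def)
  next
    case (Suc m)
    have "(Suc m + Suc n) choose Suc n = ((m + Suc n) choose Suc n) + ((m + Suc n) choose n)"
      by (simp add: add.commute)
    then show ?thesis using Suc by (simp add: one_minus_X_mult_nth G_def)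
  qed
qed

lemma G_inv: "(1 - fps_X) ^ Suc n * G n = 1"
proof (induction n)
  case 0
  show ?case
  proof (rule fps_ext)
    fix k show "((1 - fps_X) ^ Suc 0 * G 0) $ k = (1 :: real fps) $ k"
      by (cases k) (simp_all add: one_minus_X_mult_nth G_def)
  qed
next
  case (Suc n)
  have "(1 - fps_X) ^ Suc (Suc n) * G (Suc n) = (1 - fps_X) ^ Suc n * ((1 - fps_X) * G (Suc n))"
    by (simp add: mult_ac)
  also have "\<dots> = (1 - fps_X) ^ Suc n * G n" by (simp only: G_step)
  finally show ?case using Suc.IH by (simp only:)
qed

lemma hilb_nth: "hilb_series n h $ k = (\<Sum>i=0..k. coeff h i * real ((k - i + n) choose n))"
proof -
  have "((1 - fps_X) ^ Suc n :: real fps) $ 0 = 1" by (simp add: fps_power_zeroth)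
  then have "hilb_series n h = fps_of_poly h * inverse ((1 - fps_X) ^ Suc n)"
    unfolding hilb_series_def by (intro fps_divide_unit) simp
  also have "inverse ((1 - fps_X) ^ Suc n :: real fps) = G n"
    by (rule fps_inverse_unique[OF G_inv])
  finally show ?thesis by (simp add: fps_mult_nth G_def)
qed



lemma binom_lim:
  assumes k: "k \<ge> 1" and i: "i \<le> n + 1"
  shows "(\<lambda>b. real ((b * k - i + n) choose n) / real b ^ n) \<longlonglongrightarrow> real k ^ n / fact n"
proof -
  have lim: "(\<lambda>b. (\<Prod>t\<in>{0..<n}. real k + (real n - real i - real t) / real b) / fact n)
      \<longlonglongrightarrow> (\<Prod>t\<in>{0..<n}. real k + 0) / fact n"
    by (intro tendsto_divide tendsto_const tendsto_prod tendsto_add lim_const_over_n) simp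
  have ev: "\<forall>\<^sub>F b in sequentially.
      (\<Prod>t\<in>{0..<n}. real k + (real n - real i - real t) / real b) / fact n
      = real ((b * k - i + n) choose n) / real b ^ n"
  proof (rule eventually_sequentiallyI[of "n + 2"])
    fix b assume b: "n + 2 \<le> b"
    have bk: "b * k \<ge> i" proof -
      have "b \<le> b * k" using k by simp
      then show ?thesis using b i by linarith
    qed
    have bp: "real b > 0" using b by simp
    have rN: "real (b * k - i + n) = real b * real k - real i + real n" using bk by (simp add: of_nat_diff)
    have "real ((b * k - i + n) choose n) = (\<Prod>t\<in>{0..<n}. real (b * k - i + n) - real t) / fact n"
      by (simp add: binomial_gbinomial gbinomial_prod_rev)
    also have "\<dots> = (\<Prod>t\<in>{0..<n}. real b * (real k + (real n - real i - real t) / real b)) / fact n"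
    proof (rule arg_cong[where f="\<lambda>x. x / fact n"], rule prod.cong[OF refl])
      fix t
      show "real (b * k - i + n) - real t = real b * (real k + (real n - real i - real t) / real b)"
        unfolding rN using bp by (simp add: field_simps)
    qed
    also have "\<dots> = real b ^ n * (\<Prod>t\<in>{0..<n}. real k + (real n - real i - real t) / real b) / fact n"
      by (simp add: prod.distrib)
    finally show "(\<Prod>t\<in>{0..<n}. real k + (real n - real i - real t) / real b) / fact n
      = real ((b * k - i + n) choose n) / real b ^ n" using bp by simp
  qed
  show ?thesis using Lim_transform_eventually[OF lim ev] by simp
qed

lemma a_lim:
  assumes n: "n \<ge> 1" and dh: "degree h \<le> n + 1"
  shows "(\<lambda>b. hilb_series n h $ (b * k) / real b ^ n) \<longlonglongrightarrow> poly h 1 * real k ^ n / fact n"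
proof (cases "k = 0")
  case True
  have lim: "(\<lambda>b. coeff h 0 * (1 / real b) ^ n) \<longlonglongrightarrow> coeff h 0 * 0 ^ n"
    by (intro tendsto_intros)
  have eq: "(\<lambda>b. hilb_series n h $ (b * k) / real b ^ n) = (\<lambda>b. coeff h 0 * (1 / real b) ^ n)"
    using True by (simp add: hilb_nth power_one_over)
  have z1: "coeff h 0 * (0::real) ^ n = 0" using n by simp
  have z2: "poly h 1 * real k ^ n / fact n = 0" using True n by simp
  show ?thesis using lim unfolding eq z1 z2 .
next
  case False
  then have k: "k \<ge> 1" by simp
  have lim: "(\<lambda>b. \<Sum>i\<in>{0..n+1}. coeff h i * (real ((b * k - i + n) choose n) / real b ^ n))
     \<longlonglongrightarrow> (\<Sum>i\<in>{0..n+1}. coeff h i * (real k ^ n / fact n))"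
    by (intro tendsto_sum tendsto_mult tendsto_const binom_lim[OF k]) simp
  have ph: "poly h 1 = (\<Sum>i\<in>{0..n+1}. coeff h i)"
  proof -
    have "poly h 1 = (\<Sum>i\<le>degree h. coeff h i)" by (simp add: poly_altdef)
    also have "\<dots> = (\<Sum>i\<in>{0..n+1}. coeff h i)"
      by (rule sum.mono_neutral_left) (use dh in \<open>auto simp: coeff_eq_0\<close>)
    finally show ?thesis .
  qed
  have ev: "\<forall>\<^sub>F b in sequentially.
     (\<Sum>i\<in>{0..n+1}. coeff h i * (real ((b * k - i + n) choose n) / real b ^ n))
     = hilb_series n h $ (b * k) / real b ^ n"
  proof (rule eventually_sequentiallyI[of "n + 1"])
    fix b assume b: "n + 1 \<le> b"
    have "b \<le> b * k" using k by simp
    then have "n + 1 \<le> b * k" using b by linarith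
    have "hilb_series n h $ (b * k) = (\<Sum>i\<in>{0..n+1}. coeff h i * real ((b * k - i + n) choose n))"
      unfolding hilb_nth
      by (rule sum.mono_neutral_right) (use dh \<open>n + 1 \<le> b * k\<close> in \<open>auto simp: coeff_eq_0\<close>)
    then show "(\<Sum>i\<in>{0..n+1}. coeff h i * (real ((b * k - i + n) choose n) / real b ^ n))
     = hilb_series n h $ (b * k) / real b ^ n" by (simp only: sum_divide_distrib times_divide_eq_right)
  qed
  have "(\<Sum>i\<in>{0..n+1}. coeff h i * (real k ^ n / fact n)) = poly h 1 * real k ^ n / fact n"
    unfolding ph by (simp only: sum_distrib_right times_divide_eq_right mult.assoc sum_divide_distrib)
  then show ?thesis using Lim_transform_eventually[OF lim ev] by simp
qed

theorem theorem5p1: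
  fixes n :: nat and h :: "real poly"
  assumes "n \<ge> 1" and "degree h \<le> n + 1" and "poly h 1 \<noteq> 0"
  shows "\<forall>j. (\<lambda>b. fps_nth (veronese_num n h b) j / (real b ^ n * poly h 1))
            \<longlonglongrightarrow> coeff (eulerian_poly n) j / fact n"
proof
  fix j
  define c where "c = ((1 - fps_X) ^ Suc n :: real fps)"
  have eq: "(\<lambda>b. fps_nth (veronese_num n h b) j / (real b ^ n * poly h 1)) =
     (\<lambda>b. (\<Sum>m=0..j. (hilb_series n h $ (b * m) / real b ^ n) * c $ (j - m)) / poly h 1)"
  proof
    fix b
    have v: "veronese_num n h b = Abs_fps (\<lambda>k. hilb_series n h $ (b * k)) * c"
      by (simp add: veronese_num_def c_def)
    show "fps_nth (veronese_num n h b) j / (real b ^ n * poly h 1) =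
      (\<Sum>m=0..j. (hilb_series n h $ (b * m) / real b ^ n) * c $ (j - m)) / poly h 1"
      unfolding v fps_mult_nth
      by (simp only: sum_divide_distrib divide_divide_eq_left times_divide_eq_left fps_nth_Abs_fps)
  qed
  have lim: "(\<lambda>b. (\<Sum>m=0..j. (hilb_series n h $ (b * m) / real b ^ n) * c $ (j - m)) / poly h 1)
     \<longlonglongrightarrow> (\<Sum>m=0..j. (poly h 1 * real m ^ n / fact n) * c $ (j - m)) / poly h 1"
    by (intro tendsto_divide tendsto_sum tendsto_mult tendsto_const a_lim assms(1,2) assms(3))
  have "(\<Sum>m=0..j. (poly h 1 * real m ^ n / fact n) * c $ (j - m)) / poly h 1
      = (\<Sum>m=0..j. real m ^ n * c $ (j - m)) / fact n"
    using assms(3) by (simp add: sum_divide_distrib sum_distrib_left field_simps)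
  also have "(\<Sum>m=0..j. real m ^ n * c $ (j - m)) = E n $ j"
    unfolding E_def F_def c_def fps_mult_nth by simp
  also have "\<dots> = coeff (eulerian_poly n) j" by (rule E_eul[OF assms(1)])
  finally show "(\<lambda>b. fps_nth (veronese_num n h b) j / (real b ^ n * poly h 1))
            \<longlonglongrightarrow> coeff (eulerian_poly n) j / fact n" using lim unfolding eq by simp
qed

end
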